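(* Let $c$ be a nonnegative integer, $a,b,n$ positive integers and $k$ a nonnegative integer with $k\le n$. Then: (1) $\Psi_n(n,a,b,c)=\Psi_n(0,a-1,b+1,c)$; (2) $\Psi_n(n-1,1,b,c)=\Psi_{n-1}(0,c,b+1,c)$; (3) $\Psi_n(0,1,b,0)=1$; (4) for $1\le k\le n$, $\;k\big(b+(k-1)\tfrac c2\big)\,\Psi_n(k,a,b,c)=(n-k+1)\big(a-1+(n-k)\tfrac c2\big)\,\Psi_n(k-1,a,b,c)$.
   Context: All constant terms are taken with $\operatorname{CT}_x=\operatorname{CT}_{x_n}\cdots\operatorname{CT}_{x_1}$ (iterated constant-term extraction), where $(1-x_i)^{-b}$ and $x_i/(1-x_i)$ are expanded as power series in $x_i$, and for $i<j$, $(x_j-x_i)^{-c}=x_j^{-c}(1-x_i/x_j)^{-c}$ is expanded as a power series in $x_i/x_j$. $$\Psi_n(k,a,b,c):=\operatorname{CT}_x[t^k]\prod_{i=1}^n(1-x_i)^{-b}x_i^{-a+1}\Big(1+t\frac{x_i}{1-x_i}\Big)\prod_{1\le i<j\le n}(x_j-x_i)^{-c},$$ with $[t^k]$ the coefficient of $t^k$; for $n=0$ the empty product is $1$. *)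

theory Defs
  imports Complex_Main
begin

text \<open>Variables are indexed 0..n-1 (x_1..x_n of the paper).  S is the set of indices
  picking the factor t*x_i/(1-x_i) (coefficient of t^k).  m i is the exponent taken from
  the series of (1-x_i)^(-(b+[i in S])), with coefficient pochhammer(b',m)/m!;
  p i j (i<j) is the exponent of (x_i/x_j) in (x_j-x_i)^(-c) = x_j^(-c) (1-x_i/x_j)^(-c),
  with coefficient pochhammer(c,p)/p!.\<close>

definition psi_exp :: "nat \<Rightarrow> nat \<Rightarrow> nat \<Rightarrow> nat set \<Rightarrow> (nat \<Rightarrow> nat) \<Rightarrow> (nat \<Rightarrow> nat \<Rightarrow> nat) \<Rightarrow> nat \<Rightarrow> int" where
  "psi_exp n a c S m p i =
     1 - int a + (if i \<in> S then 1 else 0) + int (m i)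
     + (\<Sum>j\<in>{i<..<n}. int (p i j)) - (\<Sum>j<i. int c + int (p j i))"

definition psi_tuples :: "nat \<Rightarrow> nat \<Rightarrow> nat \<Rightarrow> nat set \<Rightarrow> ((nat \<Rightarrow> nat) \<times> (nat \<Rightarrow> nat \<Rightarrow> nat)) set" where
  "psi_tuples n a c S = {(m, p).
      (\<forall>i. n \<le> i \<longrightarrow> m i = 0) \<and>
      (\<forall>i j. \<not> (i < j \<and> j < n) \<longrightarrow> p i j = 0) \<and>
      (\<forall>i<n. psi_exp n a c S m p i = 0)}"

definition Psi :: "nat \<Rightarrow> nat \<Rightarrow> nat \<Rightarrow> nat \<Rightarrow> nat \<Rightarrow> real" where
  "Psi n k a b c =
     (\<Sum>S\<in>{S. S \<subseteq> {..<n} \<and> card S = k}.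
        \<Sum>(m, p)\<in>psi_tuples n a c S.
          (\<Prod>i<n. pochhammer (real (b + (if i \<in> S then 1 else 0))) (m i) / fact (m i))
          * (\<Prod>(i, j)\<in>{(i, j). i < j \<and> j < n}. pochhammer (real c) (p i j) / fact (p i j)))"

end

theory Submission
  imports Defs
begin


definition Prs :: "nat \<Rightarrow> (nat \<times> nat) set" where
  "Prs n = {(i, j). i < j \<and> j < n}"

definition ex :: "nat \<Rightarrow> (nat \<Rightarrow> int) \<Rightarrow> (nat \<Rightarrow> nat \<Rightarrow> nat) \<Rightarrow> (nat \<Rightarrow> nat) \<Rightarrow> (nat \<Rightarrow> nat \<Rightarrow> nat) \<Rightarrow> nat \<Rightarrow> int" where
  "ex n \<alpha> \<gamma> m p i = \<alpha> i + int (m i) + (\<Sum>j\<in>{i<..<n}. int (p i j)) - (\<Sum>j<i. int (\<gamma> j i) + int (p j i))"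

definition TT :: "nat \<Rightarrow> (nat \<Rightarrow> int) \<Rightarrow> (nat \<Rightarrow> nat \<Rightarrow> nat) \<Rightarrow> ((nat \<Rightarrow> nat) \<times> (nat \<Rightarrow> nat \<Rightarrow> nat)) set" where
  "TT n \<alpha> \<gamma> = {(m, p). (\<forall>i. n \<le> i \<longrightarrow> m i = 0) \<and> (\<forall>i j. \<not> (i < j \<and> j < n) \<longrightarrow> p i j = 0)
      \<and> (\<forall>i<n. ex n \<alpha> \<gamma> m p i = 0)}"

definition K :: "nat \<Rightarrow> nat \<Rightarrow> real" where
  "K r q = pochhammer (real r) q / fact q"

definition wt :: "nat \<Rightarrow> (nat \<Rightarrow> nat) \<Rightarrow> (nat \<Rightarrow> nat \<Rightarrow> nat) \<Rightarrow> (nat \<Rightarrow> nat) \<Rightarrow> (nat \<Rightarrow> nat \<Rightarrow> nat) \<Rightarrow> real" where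
  "wt n \<beta> \<gamma> m p = (\<Prod>i<n. K (\<beta> i) (m i)) * (\<Prod>(i, j)\<in>Prs n. K (\<gamma> i j) (p i j))"

definition CC :: "nat \<Rightarrow> (nat \<Rightarrow> int) \<Rightarrow> (nat \<Rightarrow> nat) \<Rightarrow> (nat \<Rightarrow> nat \<Rightarrow> nat) \<Rightarrow> real" where
  "CC n \<alpha> \<beta> \<gamma> = (\<Sum>(m, p)\<in>TT n \<alpha> \<gamma>. wt n \<beta> \<gamma> m p)"

lemma K_0 [simp]: "K r 0 = 1"
  by (simp add: K_def)

lemma K_pascal: "K (r + 1) (Suc q) = K r (Suc q) + K (r + 1) q"
proof -
  have e1: "pochhammer (real r) (Suc q) = real r * pochhammer (real r + 1) q"
    by (simp add: pochhammer_rec)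
  have e2: "pochhammer (real r + 1) (Suc q) = pochhammer (real r + 1) q * (real r + 1 + real q)"
    by (simp add: pochhammer_Suc)
  show ?thesis
  proof -
    have f: "(fact (Suc q) :: real) = (real q + 1) * fact q" by (simp add: fact_Suc)
    have fp: "(fact q :: real) > 0" by simp
    have nz: "(real q + 1) * fact q \<noteq> (0::real)" using fp by (simp add: add_pos_pos)
    show ?thesis unfolding K_def e1 e2 f using fp nz
      by (simp add: divide_simps pochhammer_Suc) (simp add: algebra_simps)
  qed
qed

lemma K_deriv: "real (Suc q) * K r (Suc q) = real r * K (r + 1) q"
proof -
  have f: "(fact (Suc q) :: real) = (real q + 1) * fact q" by (simp add: fact_Suc)
  have fp: "(fact q :: real) > 0" by simp
  have nz: "(real q + 1) * fact q \<noteq> (0::real)" using fp by (simp add: add_pos_pos)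
  show ?thesis unfolding K_def f using fp nz by (simp add: pochhammer_rec divide_simps) (simp add: algebra_simps)
qed

lemma K_add: "(real r + real q) * K r q = real r * K (r + 1) q"
proof -
  have "pochhammer (real r) (Suc q) = pochhammer (real r) q * (real r + real q)"
    by (simp add: pochhammer_Suc)
  moreover have "pochhammer (real r) (Suc q) = real r * pochhammer (real r + 1) q"
    by (simp add: pochhammer_rec)
  ultimately show ?thesis unfolding K_def by (simp add: field_simps)
qed

lemma sum_Prs1: "(\<Sum>i<n. \<Sum>j\<in>{i<..<n}. f i j) = (\<Sum>(i, j)\<in>Prs n. f i j)"
proof -
  have "Prs n = Sigma {..<n} (\<lambda>i. {i<..<n})"
    unfolding Prs_def by auto
  then show ?thesis by (simp add: sum.Sigma)
qed

lemma sum_Prs2: "(\<Sum>j<n. \<Sum>i<j. f i j) = (\<Sum>(i, j)\<in>Prs n. f i j)"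
proof -
  have "(\<Sum>j<n. \<Sum>i<j. f i j) = (\<Sum>(j, i)\<in>Sigma {..<n} (\<lambda>j. {..<j}). f i j)"
    by (simp add: sum.Sigma)
  also have "\<dots> = (\<Sum>(i, j)\<in>Prs n. f i j)"
    by (rule sum.reindex_bij_witness[where i=prod.swap and j=prod.swap]) (auto simp: Prs_def)
  finally show ?thesis .
qed

lemma finite_Prs [simp]: "finite (Prs n)"
proof -
  have "Prs n \<subseteq> {..<n} \<times> {..<n}" unfolding Prs_def by auto
  then show ?thesis by (rule finite_subset) auto
qed



definition Bd :: "nat \<Rightarrow> (nat \<Rightarrow> int) \<Rightarrow> (nat \<Rightarrow> nat \<Rightarrow> nat) \<Rightarrow> int" where
  "Bd n \<alpha> \<gamma> = (\<Sum>(i, j)\<in>Prs n. int (n - j) * int (\<gamma> i j)) - (\<Sum>i<n. int (n - i) * \<alpha> i)"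

lemma TT_weighted:
  assumes "(m, p) \<in> TT n \<alpha> \<gamma>"
  shows "(\<Sum>i<n. int (n - i) * int (m i)) + (\<Sum>(i, j)\<in>Prs n. int (j - i) * int (p i j)) = Bd n \<alpha> \<gamma>"
proof -
  let ?w = "\<lambda>i. int (n - i)"
  have "0 = (\<Sum>i<n. ?w i * ex n \<alpha> \<gamma> m p i)"
    using assms unfolding TT_def by (auto intro!: sum.neutral)
  also have "\<dots> = (\<Sum>i<n. ?w i * \<alpha> i) + (\<Sum>i<n. ?w i * int (m i))
      + (\<Sum>i<n. \<Sum>j\<in>{i<..<n}. ?w i * int (p i j))
      - (\<Sum>i<n. \<Sum>j<i. ?w i * (int (\<gamma> j i) + int (p j i)))"
    unfolding ex_def by (simp add: algebra_simps sum.distrib sum_subtractf sum_distrib_left)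
  also have "(\<Sum>i<n. \<Sum>j\<in>{i<..<n}. ?w i * int (p i j)) = (\<Sum>(i, j)\<in>Prs n. ?w i * int (p i j))"
    by (rule sum_Prs1)
  also have "(\<Sum>i<n. \<Sum>j<i. ?w i * (int (\<gamma> j i) + int (p j i)))
      = (\<Sum>(i, j)\<in>Prs n. ?w j * (int (\<gamma> i j) + int (p i j)))"
    by (rule sum_Prs2)
  finally have e: "0 = (\<Sum>i<n. ?w i * \<alpha> i) + (\<Sum>i<n. ?w i * int (m i))
      + (\<Sum>(i, j)\<in>Prs n. ?w i * int (p i j)) - (\<Sum>(i, j)\<in>Prs n. ?w j * (int (\<gamma> i j) + int (p i j)))" .
  have d: "(\<Sum>(i, j)\<in>Prs n. ?w i * int (p i j)) - (\<Sum>(i, j)\<in>Prs n. ?w j * (int (\<gamma> i j) + int (p i j)))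
     = (\<Sum>(i, j)\<in>Prs n. int (j - i) * int (p i j)) - (\<Sum>(i, j)\<in>Prs n. int (n - j) * int (\<gamma> i j))"
  proof -
    have "(\<Sum>(i, j)\<in>Prs n. ?w i * int (p i j)) - (\<Sum>(i, j)\<in>Prs n. ?w j * (int (\<gamma> i j) + int (p i j)))
       = (\<Sum>x\<in>Prs n. (case x of (i, j) \<Rightarrow> ?w i * int (p i j)) - (case x of (i, j) \<Rightarrow> ?w j * (int (\<gamma> i j) + int (p i j))))"
      by (simp add: sum_subtractf)
    also have "\<dots> = (\<Sum>x\<in>Prs n. (case x of (i, j) \<Rightarrow> int (j - i) * int (p i j)) - (case x of (i, j) \<Rightarrow> int (n - j) * int (\<gamma> i j)))"
      by (rule sum.cong) (auto simp: Prs_def algebra_simps of_nat_diff)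
    also have "\<dots> = (\<Sum>(i, j)\<in>Prs n. int (j - i) * int (p i j)) - (\<Sum>(i, j)\<in>Prs n. int (n - j) * int (\<gamma> i j))"
      by (simp add: sum_subtractf)
    finally show ?thesis .
  qed
  show ?thesis using e d unfolding Bd_def by linarith
qed

lemma TT_bound:
  assumes "(m, p) \<in> TT n \<alpha> \<gamma>"
  shows "\<forall>i. int (m i) \<le> Bd n \<alpha> \<gamma>" and "\<forall>i j. int (p i j) \<le> Bd n \<alpha> \<gamma>"
proof -
  have w: "(\<Sum>i<n. int (n - i) * int (m i)) + (\<Sum>(i, j)\<in>Prs n. int (j - i) * int (p i j)) = Bd n \<alpha> \<gamma>"
    by (rule TT_weighted[OF assms])
  have s1: "0 \<le> (\<Sum>i<n. int (n - i) * int (m i))" by (intro sum_nonneg) auto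
  have s2: "0 \<le> (\<Sum>(i, j)\<in>Prs n. int (j - i) * int (p i j))" by (intro sum_nonneg) auto
  have mz: "\<forall>i. n \<le> i \<longrightarrow> m i = 0" and pz: "\<forall>i j. \<not> (i < j \<and> j < n) \<longrightarrow> p i j = 0"
    using assms unfolding TT_def by auto
  show "\<forall>i. int (m i) \<le> Bd n \<alpha> \<gamma>"
  proof
    fix i
    show "int (m i) \<le> Bd n \<alpha> \<gamma>"
    proof (cases "i < n")
      case True
      have "int (m i) \<le> int (n - i) * int (m i)" using True by (simp add: mult_le_cancel_right1)
      also have "\<dots> \<le> (\<Sum>i<n. int (n - i) * int (m i))"
        using True by (intro member_le_sum) auto
      finally show ?thesis using w s2 by linarith
    next
      case False
      then have "m i = 0" using mz by auto
      moreover have "0 \<le> Bd n \<alpha> \<gamma>" using w s1 s2 by linarith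
      ultimately show ?thesis by simp
    qed
  qed
  show "\<forall>i j. int (p i j) \<le> Bd n \<alpha> \<gamma>"
  proof (intro allI)
    fix i j
    show "int (p i j) \<le> Bd n \<alpha> \<gamma>"
    proof (cases "i < j \<and> j < n")
      case True
      have "int (p i j) \<le> int (j - i) * int (p i j)" using True by (simp add: mult_le_cancel_right1)
      also have "\<dots> = (case (i, j) of (i, j) \<Rightarrow> int (j - i) * int (p i j))" by simp
      also have "\<dots> \<le> (\<Sum>(i, j)\<in>Prs n. int (j - i) * int (p i j))"
      proof -
        have "(i, j) \<in> Prs n" using True by (simp add: Prs_def)
        then show ?thesis by (intro member_le_sum) auto
      qed
      finally show ?thesis using w s1 by linarith
    next
      case False
      then have "p i j = 0" using pz by auto
      moreover have "0 \<le> Bd n \<alpha> \<gamma>" using w s1 s2 by linarith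
      ultimately show ?thesis by simp
    qed
  qed
qed

lemma finite_TT [simp]: "finite (TT n \<alpha> \<gamma>)"
proof -
  define B where "B = nat (Bd n \<alpha> \<gamma>)"
  define M where "M = {f :: nat \<Rightarrow> nat. \<forall>x. (x \<in> {..<n} \<longrightarrow> f x \<in> {..B}) \<and> (x \<notin> {..<n} \<longrightarrow> f x = 0)}"
  define P where "P = {g :: nat \<Rightarrow> nat \<Rightarrow> nat. \<forall>x. (x \<in> {..<n} \<longrightarrow> g x \<in> M) \<and> (x \<notin> {..<n} \<longrightarrow> g x = (\<lambda>_. 0))}"
  have fM: "finite M" unfolding M_def by (rule finite_set_of_finite_funs) auto
  have fP: "finite P" unfolding P_def by (rule finite_set_of_finite_funs) (auto simp: fM)
  have "TT n \<alpha> \<gamma> \<subseteq> M \<times> P"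
  proof
    fix t assume t: "t \<in> TT n \<alpha> \<gamma>"
    obtain m p where tp: "t = (m, p)" by (cases t)
    have mp: "(m, p) \<in> TT n \<alpha> \<gamma>" using t tp by simp
    note bds = TT_bound[OF mp]
    have mz: "\<forall>i. n \<le> i \<longrightarrow> m i = 0" and pz: "\<forall>i j. \<not> (i < j \<and> j < n) \<longrightarrow> p i j = 0"
      using mp unfolding TT_def by auto
    have "\<forall>i. m i \<le> B" using bds(1) unfolding B_def by (metis nat_int nat_mono)
    then have "m \<in> M" using mz unfolding M_def by auto
    moreover have "\<forall>i j. p i j \<le> B" using bds(2) unfolding B_def by (metis nat_int nat_mono)
    then have "p \<in> P" using pz unfolding P_def M_def by (auto simp: fun_eq_iff)
    ultimately show "t \<in> M \<times> P" using tp by simp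
  qed
  then show ?thesis by (rule finite_subset) (simp add: fM fP)
qed



lemma sum_upd_int:
  assumes "finite A" "x \<in> A"
  shows "(\<Sum>l\<in>A. int ((g(x := v)) l)) = (\<Sum>l\<in>A. int (g l)) + int v - int (g x)"
proof -
  have "(\<Sum>l\<in>A. int ((g(x := v)) l)) = int v + (\<Sum>l\<in>A - {x}. int ((g(x := v)) l))"
    using assms by (simp add: sum.remove)
  also have "(\<Sum>l\<in>A - {x}. int ((g(x := v)) l)) = (\<Sum>l\<in>A - {x}. int (g l))"
    by (rule sum.cong) auto
  also have "(\<Sum>l\<in>A. int (g l)) = int (g x) + (\<Sum>l\<in>A - {x}. int (g l))"
    using assms by (simp add: sum.remove)
  ultimately show ?thesis by simp
qed

lemma ex_upd_m: "ex n \<alpha> \<gamma> (m(i := v)) p l = ex n \<alpha> \<gamma> m p l + (if l = i then int v - int (m i) else 0)"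
  unfolding ex_def by auto

lemma ex_upd_a: "ex n (\<alpha>(i := x)) \<gamma> m p l = ex n \<alpha> \<gamma> m p l + (if l = i then x - \<alpha> i else 0)"
  unfolding ex_def by auto

lemma ex_upd_p:
  assumes "i < j" "j < n"
  shows "ex n \<alpha> \<gamma> m (p(i := (p i)(j := v))) l = ex n \<alpha> \<gamma> m p l
     + (if l = i then int v - int (p i j) else if l = j then int (p i j) - int v else 0)"
proof -
  consider "l = i" | "l = j" | "l \<noteq> i \<and> l \<noteq> j" by blast
  then show ?thesis
  proof cases
    case 1
    have s1: "(\<Sum>l'\<in>{i<..<n}. int ((p(i := (p i)(j := v))) i l')) = (\<Sum>l'\<in>{i<..<n}. int (p i l')) + int v - int (p i j)"
      using sum_upd_int[of "{i<..<n}" j "p i" v] assms by simp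
    have s2: "(\<Sum>l'<i. int (\<gamma> l' i) + int ((p(i := (p i)(j := v))) l' i)) = (\<Sum>l'<i. int (\<gamma> l' i) + int (p l' i))"
      by (rule sum.cong) auto
    show ?thesis using 1 s1 s2 unfolding ex_def by simp
  next
    case 2
    have s1: "(\<Sum>l'\<in>{j<..<n}. int ((p(i := (p i)(j := v))) j l')) = (\<Sum>l'\<in>{j<..<n}. int (p j l'))"
      using assms by (intro sum.cong) auto
    have s2: "(\<Sum>l'<j. int (\<gamma> l' j) + int ((p(i := (p i)(j := v))) l' j))
        = (\<Sum>l'<j. int (\<gamma> l' j)) + (\<Sum>l'<j. int (((\<lambda>l'. p l' j)(i := v)) l'))"
      by (simp add: sum.distrib) (rule sum.cong, auto)
    also have "\<dots> = (\<Sum>l'<j. int (\<gamma> l' j)) + ((\<Sum>l'<j. int (p l' j)) + int v - int (p i j))"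
      using sum_upd_int[of "{..<j}" i "\<lambda>l'. p l' j" v] assms by simp
    also have "\<dots> = (\<Sum>l'<j. int (\<gamma> l' j) + int (p l' j)) + int v - int (p i j)"
      by (simp add: sum.distrib)
    finally have s2: "(\<Sum>l'<j. int (\<gamma> l' j) + int ((p(i := (p i)(j := v))) l' j))
        = (\<Sum>l'<j. int (\<gamma> l' j) + int (p l' j)) + int v - int (p i j)" .
    show ?thesis using 2 s1 s2 assms unfolding ex_def by simp
  next
    case 3
    have s1: "(\<Sum>l'\<in>{l<..<n}. int ((p(i := (p i)(j := v))) l l')) = (\<Sum>l'\<in>{l<..<n}. int (p l l'))"
      using 3 by (intro sum.cong) auto
    have s2: "(\<Sum>l'<l. int (\<gamma> l' l) + int ((p(i := (p i)(j := v))) l' l)) = (\<Sum>l'<l. int (\<gamma> l' l) + int (p l' l))"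
      using 3 by (intro sum.cong) auto
    show ?thesis using 3 s1 s2 unfolding ex_def by simp
  qed
qed

lemma ex_upd_g:
  assumes "i < j" "j < n"
  shows "ex n \<alpha> (\<gamma>(i := (\<gamma> i)(j := Suc (\<gamma> i j)))) m p l = ex n \<alpha> \<gamma> m p l - (if l = j then 1 else 0)"
proof (cases "l = j")
  case True
  have "(\<Sum>l'<j. int ((\<gamma>(i := (\<gamma> i)(j := Suc (\<gamma> i j)))) l' j) + int (p l' j))
      = (\<Sum>l'<j. int (((\<lambda>l'. \<gamma> l' j)(i := \<gamma> i j + 1)) l')) + (\<Sum>l'<j. int (p l' j))"
    by (simp add: sum.distrib) (rule sum.cong, auto)
  also have "\<dots> = ((\<Sum>l'<j. int (\<gamma> l' j)) + int (\<gamma> i j + 1) - int (\<gamma> i j)) + (\<Sum>l'<j. int (p l' j))"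
    using sum_upd_int[of "{..<j}" i "\<lambda>l'. \<gamma> l' j" "\<gamma> i j + 1"] assms by simp
  also have "\<dots> = (\<Sum>l'<j. int (\<gamma> l' j) + int (p l' j)) + 1"
    by (simp add: sum.distrib)
  finally show ?thesis using True unfolding ex_def by simp
next
  case False
  have "(\<Sum>l'<l. int ((\<gamma>(i := (\<gamma> i)(j := Suc (\<gamma> i j)))) l' l) + int (p l' l))
      = (\<Sum>l'<l. int (\<gamma> l' l) + int (p l' l))"
    using False by (intro sum.cong) auto
  then show ?thesis using False unfolding ex_def by simp
qed

lemma TT_shift_m:
  assumes "i < n"
  shows "(\<Sum>(m, p)\<in>TT n (\<alpha>(i := \<alpha> i + 1)) \<gamma>. h m p)
       = (\<Sum>(m, p)\<in>TT n \<alpha> \<gamma>. if m i = 0 then 0 else h (m(i := m i - 1)) p)"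
proof -
  have "(\<Sum>(m, p)\<in>TT n \<alpha> \<gamma>. if m i = 0 then 0 else h (m(i := m i - 1)) p)
      = (\<Sum>t\<in>{t\<in>TT n \<alpha> \<gamma>. fst t i \<noteq> 0}. h ((fst t)(i := fst t i - 1)) (snd t))"
    by (subst sum.inter_filter) (auto intro!: sum.cong)
  also have "\<dots> = (\<Sum>(m, p)\<in>TT n (\<alpha>(i := \<alpha> i + 1)) \<gamma>. h m p)"
  proof (rule sum.reindex_bij_witness[where i="\<lambda>(m, p). (m(i := m i + 1), p)"
        and j="\<lambda>(m, p). (m(i := m i - 1), p)"])
    fix t assume t: "t \<in> {t\<in>TT n \<alpha> \<gamma>. fst t i \<noteq> 0}"
    obtain m p where tp: "t = (m, p)" by (cases t)
    show "(case (case t of (m, p) \<Rightarrow> (m(i := m i - 1), p)) of (m, p) \<Rightarrow> (m(i := m i + 1), p)) = t"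
      using t tp by auto
    show "(case t of (m, p) \<Rightarrow> (m(i := m i - 1), p)) \<in> TT n (\<alpha>(i := \<alpha> i + 1)) \<gamma>"
      using t tp assms by (auto simp: TT_def ex_upd_m ex_upd_a)
    show "(case (case t of (m, p) \<Rightarrow> (m(i := m i - 1), p)) of (m, p) \<Rightarrow> h m p) = h ((fst t)(i := fst t i - 1)) (snd t)"
      using tp by simp
  next
    fix t assume t: "t \<in> TT n (\<alpha>(i := \<alpha> i + 1)) \<gamma>"
    obtain m p where tp: "t = (m, p)" by (cases t)
    show "(case (case t of (m, p) \<Rightarrow> (m(i := m i + 1), p)) of (m, p) \<Rightarrow> (m(i := m i - 1), p)) = t"
      using t tp by auto
    show "(case t of (m, p) \<Rightarrow> (m(i := m i + 1), p)) \<in> {t\<in>TT n \<alpha> \<gamma>. fst t i \<noteq> 0}"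
      using t tp assms by (auto simp: TT_def ex_upd_m ex_upd_a)
  qed
  finally show ?thesis by simp
qed

lemma TT_shift_p:
  assumes "i < j" "j < n"
  shows "(\<Sum>(m, p)\<in>TT n (\<alpha>(i := \<alpha> i + 1)) (\<gamma>(i := (\<gamma> i)(j := \<gamma> i j + 1))). h m p)
       = (\<Sum>(m, p)\<in>TT n \<alpha> \<gamma>. if p i j = 0 then 0 else h m (p(i := (p i)(j := p i j - 1))))"
proof -
  have "(\<Sum>(m, p)\<in>TT n \<alpha> \<gamma>. if p i j = 0 then 0 else h m (p(i := (p i)(j := p i j - 1))))
      = (\<Sum>t\<in>{t\<in>TT n \<alpha> \<gamma>. snd t i j \<noteq> 0}. h (fst t) ((snd t)(i := (snd t i)(j := snd t i j - 1))))"
    by (subst sum.inter_filter) (auto intro!: sum.cong)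
  also have "\<dots> = (\<Sum>(m, p)\<in>TT n (\<alpha>(i := \<alpha> i + 1)) (\<gamma>(i := (\<gamma> i)(j := \<gamma> i j + 1))). h m p)"
  proof (rule sum.reindex_bij_witness[where i="\<lambda>(m, p). (m, p(i := (p i)(j := p i j + 1)))"
        and j="\<lambda>(m, p). (m, p(i := (p i)(j := p i j - 1)))"])
    fix t assume t: "t \<in> {t\<in>TT n \<alpha> \<gamma>. snd t i j \<noteq> 0}"
    obtain m p where tp: "t = (m, p)" by (cases t)
    show "(case (case t of (m, p) \<Rightarrow> (m, p(i := (p i)(j := p i j - 1)))) of (m, p) \<Rightarrow> (m, p(i := (p i)(j := p i j + 1)))) = t"
      using t tp by (auto simp: fun_eq_iff)
    have "\<forall>l<n. ex n (\<alpha>(i := \<alpha> i + 1)) (\<gamma>(i := (\<gamma> i)(j := \<gamma> i j + 1))) m (p(i := (p i)(j := p i j - 1))) l = 0"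
      using t tp assms by (auto simp: TT_def ex_upd_p ex_upd_a ex_upd_g)
    moreover have "\<forall>a b. \<not> (a < b \<and> b < n) \<longrightarrow> (p(i := (p i)(j := p i j - 1))) a b = 0"
      using t tp assms by (auto simp: TT_def)
    ultimately show "(case t of (m, p) \<Rightarrow> (m, p(i := (p i)(j := p i j - 1)))) \<in> TT n (\<alpha>(i := \<alpha> i + 1)) (\<gamma>(i := (\<gamma> i)(j := \<gamma> i j + 1)))"
      using t tp by (auto simp: TT_def)
    show "(case (case t of (m, p) \<Rightarrow> (m, p(i := (p i)(j := p i j - 1)))) of (m, p) \<Rightarrow> h m p) = h (fst t) ((snd t)(i := (snd t i)(j := snd t i j - 1)))"
      using tp by simp
  next
    fix t assume t: "t \<in> TT n (\<alpha>(i := \<alpha> i + 1)) (\<gamma>(i := (\<gamma> i)(j := \<gamma> i j + 1)))"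
    obtain m p where tp: "t = (m, p)" by (cases t)
    show "(case (case t of (m, p) \<Rightarrow> (m, p(i := (p i)(j := p i j + 1)))) of (m, p) \<Rightarrow> (m, p(i := (p i)(j := p i j - 1)))) = t"
      using t tp by (auto simp: fun_eq_iff)
    have "\<forall>l<n. ex n \<alpha> \<gamma> m (p(i := (p i)(j := p i j + 1))) l = 0"
      using t tp assms by (auto simp: TT_def ex_upd_p ex_upd_a ex_upd_g split: if_splits)
    moreover have "\<forall>a b. \<not> (a < b \<and> b < n) \<longrightarrow> (p(i := (p i)(j := p i j + 1))) a b = 0"
      using t tp assms by (auto simp: TT_def)
    ultimately show "(case t of (m, p) \<Rightarrow> (m, p(i := (p i)(j := p i j + 1)))) \<in> {t\<in>TT n \<alpha> \<gamma>. snd t i j \<noteq> 0}"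
      using t tp by (auto simp: TT_def)
  qed
  finally show ?thesis by simp
qed

lemma TT_same_g:
  assumes "i < j" "j < n"
  shows "TT n (\<alpha>(j := \<alpha> j + 1)) (\<gamma>(i := (\<gamma> i)(j := \<gamma> i j + 1))) = TT n \<alpha> \<gamma>"
  using assms by (auto simp: TT_def ex_upd_a ex_upd_g)



definition WM :: "nat \<Rightarrow> (nat \<Rightarrow> nat) \<Rightarrow> (nat \<Rightarrow> nat) \<Rightarrow> nat \<Rightarrow> real" where
  "WM n \<beta> m i = (\<Prod>l\<in>{..<n} - {i}. K (\<beta> l) (m l))"
definition WB :: "nat \<Rightarrow> (nat \<Rightarrow> nat) \<Rightarrow> (nat \<Rightarrow> nat) \<Rightarrow> real" where
  "WB n \<beta> m = (\<Prod>l<n. K (\<beta> l) (m l))"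
definition WG :: "nat \<Rightarrow> (nat \<Rightarrow> nat \<Rightarrow> nat) \<Rightarrow> (nat \<Rightarrow> nat \<Rightarrow> nat) \<Rightarrow> real" where
  "WG n \<gamma> p = (\<Prod>(a, b)\<in>Prs n. K (\<gamma> a b) (p a b))"
definition WGx :: "nat \<Rightarrow> (nat \<Rightarrow> nat \<Rightarrow> nat) \<Rightarrow> (nat \<Rightarrow> nat \<Rightarrow> nat) \<Rightarrow> nat \<Rightarrow> nat \<Rightarrow> real" where
  "WGx n \<gamma> p i j = (\<Prod>(a, b)\<in>Prs n - {(i, j)}. K (\<gamma> a b) (p a b))"

lemma wt_m: "i < n \<Longrightarrow> wt n \<beta> \<gamma> m p = K (\<beta> i) (m i) * WM n \<beta> m i * WG n \<gamma> p"
  unfolding wt_def WM_def WG_def by (simp add: prod.remove)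

lemma WM_upd [simp]: "WM n (\<beta>(i := x)) (m(i := v)) i = WM n \<beta> m i"
  unfolding WM_def by (rule prod.cong) auto

lemma WM_updb [simp]: "WM n (\<beta>(i := x)) m i = WM n \<beta> m i"
  unfolding WM_def by (rule prod.cong) auto

lemma WM_upd' [simp]: "WM n \<beta> (m(i := v)) i = WM n \<beta> m i"
  unfolding WM_def by (rule prod.cong) auto

lemma wt_p: "i < j \<Longrightarrow> j < n \<Longrightarrow> wt n \<beta> \<gamma> m p = WB n \<beta> m * K (\<gamma> i j) (p i j) * WGx n \<gamma> p i j"
proof -
  assume a: "i < j" "j < n"
  have "(i, j) \<in> Prs n" using a by (simp add: Prs_def)
  then have "WG n \<gamma> p = K (\<gamma> i j) (p i j) * WGx n \<gamma> p i j"
    unfolding WG_def WGx_def by (simp add: prod.remove)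
  then show ?thesis unfolding wt_def WB_def WG_def by simp
qed

lemma WGx_upd [simp]: "WGx n (\<gamma>(i := (\<gamma> i)(j := x))) (p(i := (p i)(j := v))) i j = WGx n \<gamma> p i j"
  unfolding WGx_def by (rule prod.cong) (auto split: if_splits)

lemma WGx_upd' [simp]: "WGx n \<gamma> (p(i := (p i)(j := v))) i j = WGx n \<gamma> p i j"
  unfolding WGx_def by (rule prod.cong) (auto split: if_splits)

lemma WGx_upd'' [simp]: "WGx n (\<gamma>(i := (\<gamma> i)(j := x))) p i j = WGx n \<gamma> p i j"
  unfolding WGx_def by (rule prod.cong) (auto split: if_splits)

lemma sum_pair_diff: "(\<Sum>(m, p)\<in>A. f m p - g m p) = (\<Sum>(m, p)\<in>A. f m p) - (\<Sum>(m, p)\<in>A. (g m p :: real))"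
  by (simp add: sum_subtractf case_prod_unfold)

lemma K_pascal': "K r q = K (Suc r) q - (if q = 0 then 0 else K (Suc r) (q - 1))"
  using K_pascal[of r "q - 1"] by (cases q) auto

lemma R1:
  assumes "i < n"
  shows "CC n \<alpha> \<beta> \<gamma> = CC n \<alpha> (\<beta>(i := Suc (\<beta> i))) \<gamma> - CC n (\<alpha>(i := \<alpha> i + 1)) (\<beta>(i := Suc (\<beta> i))) \<gamma>"
proof -
  let ?b = "\<beta>(i := Suc (\<beta> i))"
  have e2: "CC n (\<alpha>(i := \<alpha> i + 1)) ?b \<gamma>
     = (\<Sum>(m, p)\<in>TT n \<alpha> \<gamma>. (if m i = 0 then 0 else K (Suc (\<beta> i)) (m i - 1)) * WM n \<beta> m i * WG n \<gamma> p)"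
    unfolding CC_def using assms
    by (subst TT_shift_m) (auto intro!: sum.cong simp: wt_m)
  have e1: "CC n \<alpha> ?b \<gamma> = (\<Sum>(m, p)\<in>TT n \<alpha> \<gamma>. K (Suc (\<beta> i)) (m i) * WM n \<beta> m i * WG n \<gamma> p)"
    unfolding CC_def using assms by (auto intro!: sum.cong simp: wt_m)
  have e0: "CC n \<alpha> \<beta> \<gamma> = (\<Sum>(m, p)\<in>TT n \<alpha> \<gamma>. K (Suc (\<beta> i)) (m i) * WM n \<beta> m i * WG n \<gamma> p
        - (if m i = 0 then 0 else K (Suc (\<beta> i)) (m i - 1)) * WM n \<beta> m i * WG n \<gamma> p)"
    unfolding CC_def using assms
    by (intro sum.cong refl) (auto simp: wt_m K_pascal'[of "\<beta> i"] algebra_simps)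
  show ?thesis unfolding e0 e1 e2 by (rule sum_pair_diff)
qed

lemma R2:
  assumes "i < j" "j < n"
  shows "CC n \<alpha> \<beta> \<gamma> = CC n (\<alpha>(j := \<alpha> j + 1)) \<beta> (\<gamma>(i := (\<gamma> i)(j := Suc (\<gamma> i j))))
                       - CC n (\<alpha>(i := \<alpha> i + 1)) \<beta> (\<gamma>(i := (\<gamma> i)(j := Suc (\<gamma> i j))))"
proof -
  let ?g = "\<gamma>(i := (\<gamma> i)(j := Suc (\<gamma> i j)))"
  have e2: "CC n (\<alpha>(i := \<alpha> i + 1)) \<beta> ?g
     = (\<Sum>(m, p)\<in>TT n \<alpha> \<gamma>. WB n \<beta> m * (if p i j = 0 then 0 else K (Suc (\<gamma> i j)) (p i j - 1)) * WGx n \<gamma> p i j)"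
    unfolding CC_def using assms
    by (subst TT_shift_p[unfolded Suc_eq_plus1[symmetric]]) (auto intro!: sum.cong simp: wt_p)
  have e1: "CC n (\<alpha>(j := \<alpha> j + 1)) \<beta> ?g = (\<Sum>(m, p)\<in>TT n \<alpha> \<gamma>. WB n \<beta> m * K (Suc (\<gamma> i j)) (p i j) * WGx n \<gamma> p i j)"
    unfolding CC_def using assms
    by (subst TT_same_g[unfolded Suc_eq_plus1[symmetric]]) (auto intro!: sum.cong simp: wt_p)
  have e0: "CC n \<alpha> \<beta> \<gamma> = (\<Sum>(m, p)\<in>TT n \<alpha> \<gamma>. WB n \<beta> m * K (Suc (\<gamma> i j)) (p i j) * WGx n \<gamma> p i j
        - WB n \<beta> m * (if p i j = 0 then 0 else K (Suc (\<gamma> i j)) (p i j - 1)) * WGx n \<gamma> p i j)"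
    unfolding CC_def using assms
    by (intro sum.cong refl) (auto simp: wt_p K_pascal'[of "\<gamma> i j"] algebra_simps)
  show ?thesis unfolding e0 e1 e2 by (rule sum_pair_diff)
qed



lemma Da:
  assumes "i < n"
  shows "(\<Sum>(m, p)\<in>TT n \<alpha> \<gamma>. real (m i) * wt n \<beta> \<gamma> m p)
       = real (\<beta> i) * CC n (\<alpha>(i := \<alpha> i + 1)) (\<beta>(i := Suc (\<beta> i))) \<gamma>"
proof -
  have "real (\<beta> i) * CC n (\<alpha>(i := \<alpha> i + 1)) (\<beta>(i := Suc (\<beta> i))) \<gamma>
     = (\<Sum>(m, p)\<in>TT n \<alpha> \<gamma>. real (\<beta> i) * ((if m i = 0 then 0 else K (Suc (\<beta> i)) (m i - 1)) * WM n \<beta> m i * WG n \<gamma> p))"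
    unfolding CC_def using assms
    by (subst TT_shift_m) (auto intro!: sum.cong simp: wt_m sum_distrib_left case_prod_unfold)
  also have "\<dots> = (\<Sum>(m, p)\<in>TT n \<alpha> \<gamma>. real (m i) * wt n \<beta> \<gamma> m p)"
  proof (intro sum.cong refl, clarify)
    fix m p
    show "real (\<beta> i) * ((if m i = 0 then 0 else K (Suc (\<beta> i)) (m i - 1)) * WM n \<beta> m i * WG n \<gamma> p)
        = real (m i) * wt n \<beta> \<gamma> m p"
    proof (cases "m i")
      case 0 then show ?thesis by simp
    next
      case (Suc q)
      have "real (Suc q) * K (\<beta> i) (Suc q) = real (\<beta> i) * K (\<beta> i + 1) q" by (rule K_deriv)
      then show ?thesis using Suc assms by (simp add: wt_m)
    qed
  qed
  finally show ?thesis by simp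
qed

lemma Db:
  assumes "i < j" "j < n"
  shows "(\<Sum>(m, p)\<in>TT n \<alpha> \<gamma>. real (p i j) * wt n \<beta> \<gamma> m p)
       = real (\<gamma> i j) * CC n (\<alpha>(i := \<alpha> i + 1)) \<beta> (\<gamma>(i := (\<gamma> i)(j := Suc (\<gamma> i j))))"
proof -
  have "real (\<gamma> i j) * CC n (\<alpha>(i := \<alpha> i + 1)) \<beta> (\<gamma>(i := (\<gamma> i)(j := Suc (\<gamma> i j))))
     = (\<Sum>(m, p)\<in>TT n \<alpha> \<gamma>. real (\<gamma> i j) * (WB n \<beta> m * (if p i j = 0 then 0 else K (Suc (\<gamma> i j)) (p i j - 1)) * WGx n \<gamma> p i j))"
    unfolding CC_def using assms
    by (subst TT_shift_p[unfolded Suc_eq_plus1[symmetric]]) (auto intro!: sum.cong simp: wt_p sum_distrib_left case_prod_unfold)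
  also have "\<dots> = (\<Sum>(m, p)\<in>TT n \<alpha> \<gamma>. real (p i j) * wt n \<beta> \<gamma> m p)"
  proof (intro sum.cong refl, clarify)
    fix m p
    show "real (\<gamma> i j) * (WB n \<beta> m * (if p i j = 0 then 0 else K (Suc (\<gamma> i j)) (p i j - 1)) * WGx n \<gamma> p i j)
        = real (p i j) * wt n \<beta> \<gamma> m p"
    proof (cases "p i j")
      case 0 then show ?thesis by simp
    next
      case (Suc q)
      have "real (Suc q) * K (\<gamma> i j) (Suc q) = real (\<gamma> i j) * K (\<gamma> i j + 1) q" by (rule K_deriv)
      then show ?thesis using Suc assms by (simp add: wt_p)
    qed
  qed
  finally show ?thesis by simp
qed

lemma Dc:
  assumes "j < i" "i < n"
  shows "(\<Sum>(m, p)\<in>TT n \<alpha> \<gamma>. (real (\<gamma> j i) + real (p j i)) * wt n \<beta> \<gamma> m p)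
       = real (\<gamma> j i) * CC n (\<alpha>(i := \<alpha> i + 1)) \<beta> (\<gamma>(j := (\<gamma> j)(i := Suc (\<gamma> j i))))"
proof -
  have "real (\<gamma> j i) * CC n (\<alpha>(i := \<alpha> i + 1)) \<beta> (\<gamma>(j := (\<gamma> j)(i := Suc (\<gamma> j i))))
     = (\<Sum>(m, p)\<in>TT n \<alpha> \<gamma>. real (\<gamma> j i) * (WB n \<beta> m * K (Suc (\<gamma> j i)) (p j i) * WGx n \<gamma> p j i))"
    unfolding CC_def using assms
    by (subst TT_same_g[unfolded Suc_eq_plus1[symmetric]]) (auto intro!: sum.cong simp: wt_p sum_distrib_left case_prod_unfold)
  also have "\<dots> = (\<Sum>(m, p)\<in>TT n \<alpha> \<gamma>. (real (\<gamma> j i) + real (p j i)) * wt n \<beta> \<gamma> m p)"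
  proof (intro sum.cong refl, clarify)
    fix m p
    have "(real (\<gamma> j i) + real (p j i)) * K (\<gamma> j i) (p j i) = real (\<gamma> j i) * K (\<gamma> j i + 1) (p j i)" by (rule K_add)
    then show "real (\<gamma> j i) * (WB n \<beta> m * K (Suc (\<gamma> j i)) (p j i) * WGx n \<gamma> p j i)
        = (real (\<gamma> j i) + real (p j i)) * wt n \<beta> \<gamma> m p"
      using assms by (simp add: wt_p)
  qed
  finally show ?thesis by simp
qed

lemma Dlem:
  assumes "i < n"
  shows "of_int (\<alpha> i) * CC n \<alpha> \<beta> \<gamma> + real (\<beta> i) * CC n (\<alpha>(i := \<alpha> i + 1)) (\<beta>(i := Suc (\<beta> i))) \<gamma>
   + (\<Sum>j\<in>{i<..<n}. real (\<gamma> i j) * CC n (\<alpha>(i := \<alpha> i + 1)) \<beta> (\<gamma>(i := (\<gamma> i)(j := Suc (\<gamma> i j)))))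
   - (\<Sum>j<i. real (\<gamma> j i) * CC n (\<alpha>(i := \<alpha> i + 1)) \<beta> (\<gamma>(j := (\<gamma> j)(i := Suc (\<gamma> j i))))) = 0"
proof -
  let ?T = "TT n \<alpha> \<gamma>"
  let ?w = "\<lambda>t. wt n \<beta> \<gamma> (fst t) (snd t)"
  have z: "(\<Sum>t\<in>?T. of_int (ex n \<alpha> \<gamma> (fst t) (snd t) i) * ?w t) = 0"
    using assms by (intro sum.neutral) (auto simp: TT_def)
  have "(\<Sum>t\<in>?T. of_int (ex n \<alpha> \<gamma> (fst t) (snd t) i) * ?w t)
      = (\<Sum>t\<in>?T. of_int (\<alpha> i) * ?w t + real (fst t i) * ?w t
          + (\<Sum>j\<in>{i<..<n}. real (snd t i j) * ?w t) - (\<Sum>j<i. (real (\<gamma> j i) + real (snd t j i)) * ?w t))"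
    by (intro sum.cong refl) (simp add: ex_def ring_distribs sum_distrib_right sum.distrib sum_subtractf)
  also have "\<dots> = of_int (\<alpha> i) * (\<Sum>t\<in>?T. ?w t) + (\<Sum>t\<in>?T. real (fst t i) * ?w t)
          + (\<Sum>j\<in>{i<..<n}. \<Sum>t\<in>?T. real (snd t i j) * ?w t) - (\<Sum>j<i. \<Sum>t\<in>?T. (real (\<gamma> j i) + real (snd t j i)) * ?w t)"
    by (simp add: sum.distrib sum_subtractf sum_distrib_left sum.swap[of _ "{i<..<n}"] sum.swap[of _ "{..<i}"])
  also have "(\<Sum>t\<in>?T. ?w t) = CC n \<alpha> \<beta> \<gamma>" by (simp add: CC_def case_prod_unfold)
  also have "(\<Sum>t\<in>?T. real (fst t i) * ?w t) = real (\<beta> i) * CC n (\<alpha>(i := \<alpha> i + 1)) (\<beta>(i := Suc (\<beta> i))) \<gamma>"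
    using Da[OF assms] by (simp add: case_prod_unfold)
  also have "(\<Sum>j\<in>{i<..<n}. \<Sum>t\<in>?T. real (snd t i j) * ?w t)
     = (\<Sum>j\<in>{i<..<n}. real (\<gamma> i j) * CC n (\<alpha>(i := \<alpha> i + 1)) \<beta> (\<gamma>(i := (\<gamma> i)(j := Suc (\<gamma> i j)))))"
    using Db by (intro sum.cong refl) (simp add: case_prod_unfold)
  also have "(\<Sum>j<i. \<Sum>t\<in>?T. (real (\<gamma> j i) + real (snd t j i)) * ?w t)
     = (\<Sum>j<i. real (\<gamma> j i) * CC n (\<alpha>(i := \<alpha> i + 1)) \<beta> (\<gamma>(j := (\<gamma> j)(i := Suc (\<gamma> j i)))))"
    using Dc assms by (intro sum.cong refl) (simp add: case_prod_unfold)
  finally show ?thesis using z by linarith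
qed



definition Sub :: "nat \<Rightarrow> nat \<Rightarrow> nat set set" where
  "Sub n k = {S. S \<subseteq> {..<n} \<and> card S = k}"

lemma finite_Sub [simp]: "finite (Sub n k)"
proof -
  have "Sub n k \<subseteq> Pow {..<n}" unfolding Sub_def by auto
  then show ?thesis by (rule finite_subset) auto
qed

definition al :: "nat \<Rightarrow> nat set \<Rightarrow> nat \<Rightarrow> int" where
  "al a S i = 1 - int a + (if i \<in> S then 1 else 0)"
definition be :: "nat \<Rightarrow> nat set \<Rightarrow> nat \<Rightarrow> nat" where
  "be b S i = b + (if i \<in> S then 1 else 0)"

lemma al_ins: "i \<notin> S \<Longrightarrow> (al a S)(i := al a S i + 1) = al a (insert i S)"
  by (auto simp: al_def fun_eq_iff)
lemma be_ins: "i \<notin> S \<Longrightarrow> (be b S)(i := Suc (be b S i)) = be b (insert i S)"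
  by (auto simp: be_def fun_eq_iff)

lemma Psi_CC: "Psi n k a b c = (\<Sum>S\<in>Sub n k. CC n (al a S) (be b S) (\<lambda>_ _. c))"
  unfolding Psi_def Sub_def
proof (intro sum.cong refl)
  fix S
  have tt: "psi_tuples n a c S = TT n (al a S) (\<lambda>_ _. c)"
    unfolding psi_tuples_def TT_def psi_exp_def ex_def al_def by auto
  show "(\<Sum>(m, p)\<in>psi_tuples n a c S.
          (\<Prod>i<n. pochhammer (real (b + (if i \<in> S then 1 else 0))) (m i) / fact (m i))
          * (\<Prod>(i, j)\<in>{(i, j). i < j \<and> j < n}. pochhammer (real c) (p i j) / fact (p i j)))
      = CC n (al a S) (be b S) (\<lambda>_ _. c)"
    unfolding CC_def tt wt_def K_def be_def Prs_def by simp
qed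

lemma two_choose: "2 * real (r choose 2) = real r * (real r - 1)"
proof (induction r)
  case 0 then show ?case by simp
next
  case (Suc r)
  have "Suc r choose 2 = r + (r choose 2)"
    using binomial_Suc_Suc[of r 1] by (simp add: numeral_2_eq_2)
  then show ?case using Suc by (simp add: algebra_simps)
qed

lemma pair_card:
  fixes R :: "nat set"
  assumes "finite R"
  shows "card {(i, j). i < j \<and> i \<in> R \<and> j \<in> R} = card R choose 2"
proof -
  let ?P = "{(i, j). i < j \<and> i \<in> R \<and> j \<in> R} :: (nat \<times> nat) set"
  have inj: "inj_on (\<lambda>(i, j). {i, j}) ?P"
    by (auto simp: inj_on_def doubleton_eq_iff)
  have img: "(\<lambda>(i, j). {i, j}) ` ?P = {B. B \<subseteq> R \<and> card B = 2}"
  proof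
    show "(\<lambda>(i, j). {i, j}) ` ?P \<subseteq> {B. B \<subseteq> R \<and> card B = 2}" by auto
  next
    show "{B. B \<subseteq> R \<and> card B = 2} \<subseteq> (\<lambda>(i, j). {i, j}) ` ?P"
    proof
      fix B assume "B \<in> {B. B \<subseteq> R \<and> card B = 2}"
      then obtain x y where B: "B = {x, y}" "x \<noteq> y" "x \<in> R" "y \<in> R" by (auto simp: card_2_iff)
      show "B \<in> (\<lambda>(i, j). {i, j}) ` ?P"
      proof (cases "x < y")
        case True then show ?thesis using B by (intro image_eqI[where x="(x, y)"]) auto
      next
        case False then have "y < x" using B by simp
        then show ?thesis using B by (intro image_eqI[where x="(y, x)"]) auto
      qed
    qed
  qed
  have "card ?P = card ((\<lambda>(i, j). {i, j}) ` ?P)" using inj by (simp add: card_image)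
  also have "\<dots> = card R choose 2" unfolding img using assms by (rule n_subsets)
  finally show ?thesis .
qed

lemma pair_card_Prs:
  assumes "R \<subseteq> {..<n}"
  shows "card {x \<in> Prs n. fst x \<in> R \<and> snd x \<in> R} = card R choose 2"
proof -
  have "{x \<in> Prs n. fst x \<in> R \<and> snd x \<in> R} = {(i, j). i < j \<and> i \<in> R \<and> j \<in> R}"
    using assms unfolding Prs_def by auto
  moreover have "finite R" using assms finite_subset by blast
  ultimately show ?thesis using pair_card by simp
qed



definition Phi :: "nat \<Rightarrow> nat \<Rightarrow> nat \<Rightarrow> nat \<Rightarrow> nat set \<Rightarrow> real" where
  "Phi n a b c S = CC n (al a S) (be b S) (\<lambda>_ _. c)"

definition cgu :: "nat \<Rightarrow> nat \<Rightarrow> nat \<Rightarrow> nat \<Rightarrow> nat \<Rightarrow> nat" where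
  "cgu c i j = (\<lambda>_ _. c)(i := (\<lambda>_. c)(j := Suc c))"

definition Gt :: "nat \<Rightarrow> nat \<Rightarrow> nat \<Rightarrow> nat \<Rightarrow> nat set \<Rightarrow> nat \<Rightarrow> nat \<Rightarrow> nat \<Rightarrow> real" where
  "Gt n a b c T l i j = CC n ((al a T)(l := al a T l + 1)) (be b T) (cgu c i j)"

lemma Dinst:
  assumes "i < n" "i \<notin> T"
  shows "(1 - real a) * Phi n a b c T + real b * Phi n a b c (insert i T)
     + (\<Sum>j\<in>{i<..<n}. real c * Gt n a b c T i i j) - (\<Sum>j<i. real c * Gt n a b c T i j i) = 0"
proof -
  have "of_int (al a T i) = 1 - real a" using assms by (simp add: al_def)
  moreover have "be b T i = b" using assms by (simp add: be_def)
  ultimately show ?thesis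
    using Dlem[OF assms(1), of "al a T" "be b T" "\<lambda>_ _. c"] assms
    by (simp add: Phi_def Gt_def cgu_def al_ins be_ins[symmetric])
qed

lemma R2inst:
  assumes "i < j" "j < n"
  shows "Phi n a b c T = Gt n a b c T j i j - Gt n a b c T i i j"
  using R2[OF assms, of "al a T" "be b T" "\<lambda>_ _. c"] by (simp add: Phi_def Gt_def cgu_def)

lemma Mixed:
  assumes "i < j" "j < n" "i \<notin> U" "j \<notin> U"
  shows "Gt n a b c (insert j U) i i j - Gt n a b c (insert i U) j i j = Phi n a b c (insert i (insert j U))"
proof -
  let ?V = "insert i (insert j U)"
  have ij: "i \<noteq> j" using assms by simp
  have a1: "(al a (insert j U))(i := al a (insert j U) i + 1) = al a ?V"
    using assms ij by (simp add: al_ins)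
  have a2: "(al a (insert i U))(j := al a (insert i U) j + 1) = al a ?V"
    using assms ij by (simp add: al_ins insert_commute)
  have b1: "(be b (insert j U))(i := Suc (be b (insert j U) i)) = be b ?V"
    using assms ij by (simp add: be_ins)
  have b2: "(be b (insert i U))(j := Suc (be b (insert i U) j)) = be b ?V"
    using assms ij by (simp add: be_ins insert_commute)
  have r1: "CC n (al a ?V) (be b (insert j U)) (cgu c i j)
      = CC n (al a ?V) (be b ?V) (cgu c i j) - CC n ((al a ?V)(i := al a ?V i + 1)) (be b ?V) (cgu c i j)"
    using R1[of i n "al a ?V" "be b (insert j U)" "cgu c i j"] assms b1 by simp
  have r2: "CC n (al a ?V) (be b (insert i U)) (cgu c i j)
      = CC n (al a ?V) (be b ?V) (cgu c i j) - CC n ((al a ?V)(j := al a ?V j + 1)) (be b ?V) (cgu c i j)"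
    using R1[of j n "al a ?V" "be b (insert i U)" "cgu c i j"] assms b2 by simp
  have r3: "Phi n a b c ?V = CC n ((al a ?V)(j := al a ?V j + 1)) (be b ?V) (cgu c i j)
       - CC n ((al a ?V)(i := al a ?V i + 1)) (be b ?V) (cgu c i j)"
    using R2[OF assms(1,2), of "al a ?V" "be b ?V" "\<lambda>_ _. c"] by (simp add: Phi_def cgu_def)
  show ?thesis unfolding Gt_def a1 a2 using r1 r2 r3 by simp
qed



lemma S1:
  assumes "k \<le> n" "1 \<le> k"
  shows "(\<Sum>i<n. \<Sum>T\<in>{T \<in> Sub n (k - 1). i \<notin> T}. f T) = real (n - (k - 1)) * (\<Sum>T\<in>Sub n (k - 1). (f T :: real))"
proof -
  have "(\<Sum>i<n. \<Sum>T\<in>{T. T \<in> Sub n (k - 1) \<and> i \<notin> T}. f T)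
      = (\<Sum>T\<in>Sub n (k - 1). \<Sum>i\<in>{i. i \<in> {..<n} \<and> i \<notin> T}. f T)"
    by (rule sum.swap_restrict) auto
  also have "\<dots> = (\<Sum>T\<in>Sub n (k - 1). real (n - (k - 1)) * f T)"
  proof (rule sum.cong[OF refl])
    fix T assume T: "T \<in> Sub n (k - 1)"
    have "{i. i \<in> {..<n} \<and> i \<notin> T} = {..<n} - T" by auto
    moreover have "card ({..<n} - T) = n - (k - 1)"
    proof -
      have TT: "T \<subseteq> {..<n}" "card T = k - 1" using T unfolding Sub_def by auto
      have "finite T" using TT(1) by (rule finite_subset) auto
      then show ?thesis using TT by (simp add: card_Diff_subset)
    qed
    ultimately show "(\<Sum>i\<in>{i. i \<in> {..<n} \<and> i \<notin> T}. f T) = real (n - (k - 1)) * f T" by simp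
  qed
  finally show ?thesis by (simp add: sum_distrib_left)
qed

lemma S2:
  assumes "1 \<le> k"
  shows "(\<Sum>i<n. \<Sum>T\<in>{T \<in> Sub n (k - 1). i \<notin> T}. f (insert i T)) = real k * (\<Sum>V\<in>Sub n k. (f V :: real))"
proof -
  have "(\<Sum>i<n. \<Sum>T\<in>{T \<in> Sub n (k - 1). i \<notin> T}. f (insert i T))
      = (\<Sum>(i, T)\<in>Sigma {..<n} (\<lambda>i. {T \<in> Sub n (k - 1). i \<notin> T}). f (insert i T))"
    by (rule sum.Sigma) auto
  also have "\<dots> = (\<Sum>(V, i)\<in>Sigma (Sub n k) (\<lambda>V. V). f V)"
  proof (rule sum.reindex_bij_witness[where i="\<lambda>(V, i). (i, V - {i})" and j="\<lambda>(i, T). (insert i T, i)"])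
    fix x assume x: "x \<in> Sigma {..<n} (\<lambda>i. {T \<in> Sub n (k - 1). i \<notin> T})"
    obtain i T where xt: "x = (i, T)" by (cases x)
    have fT: "finite T" using x xt unfolding Sub_def by (auto intro: finite_subset)
    show "(case (case x of (i, T) \<Rightarrow> (insert i T, i)) of (V, i) \<Rightarrow> (i, V - {i})) = x"
      using x xt by auto
    show "(case x of (i, T) \<Rightarrow> (insert i T, i)) \<in> Sigma (Sub n k) (\<lambda>V. V)"
      using x xt fT assms unfolding Sub_def by auto
    show "(case (case x of (i, T) \<Rightarrow> (insert i T, i)) of (V, i) \<Rightarrow> f V) = (case x of (i, T) \<Rightarrow> f (insert i T))"
      using xt by simp
  next
    fix y assume y: "y \<in> Sigma (Sub n k) (\<lambda>V. V)"
    obtain V i where yv: "y = (V, i)" by (cases y)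
    have fV: "finite V" using y yv unfolding Sub_def by (auto intro: finite_subset)
    show "(case (case y of (V, i) \<Rightarrow> (i, V - {i})) of (i, T) \<Rightarrow> (insert i T, i)) = y"
      using y yv by auto
    show "(case y of (V, i) \<Rightarrow> (i, V - {i})) \<in> Sigma {..<n} (\<lambda>i. {T \<in> Sub n (k - 1). i \<notin> T})"
      using y yv fV unfolding Sub_def by auto
  qed
  also have "\<dots> = (\<Sum>V\<in>Sub n k. \<Sum>i\<in>V. f V)"
    by (rule sum.Sigma[symmetric]) (auto simp: Sub_def intro: finite_subset)
  also have "\<dots> = (\<Sum>V\<in>Sub n k. real k * f V)"
    by (rule sum.cong) (auto simp: Sub_def)
  finally show ?thesis by (simp add: sum_distrib_left)
qed

lemma Cnt1:
  assumes "k \<le> n" "1 \<le> k"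
  shows "(\<Sum>x\<in>Prs n. \<Sum>T\<in>{T \<in> Sub n (k - 1). fst x \<notin> T \<and> snd x \<notin> T}. f T)
       = real ((n - (k - 1)) choose 2) * (\<Sum>T\<in>Sub n (k - 1). (f T :: real))"
proof -
  have "(\<Sum>x\<in>Prs n. \<Sum>T\<in>{T. T \<in> Sub n (k - 1) \<and> fst x \<notin> T \<and> snd x \<notin> T}. f T)
      = (\<Sum>T\<in>Sub n (k - 1). \<Sum>x\<in>{x. x \<in> Prs n \<and> fst x \<notin> T \<and> snd x \<notin> T}. f T)"
    by (rule sum.swap_restrict) auto
  also have "\<dots> = (\<Sum>T\<in>Sub n (k - 1). real ((n - (k - 1)) choose 2) * f T)"
  proof (rule sum.cong[OF refl])
    fix T assume T: "T \<in> Sub n (k - 1)"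
    have "{x. x \<in> Prs n \<and> fst x \<notin> T \<and> snd x \<notin> T} = {x \<in> Prs n. fst x \<in> {..<n} - T \<and> snd x \<in> {..<n} - T}"
      by (auto simp: Prs_def)
    moreover have "card ({..<n} - T) = n - (k - 1)"
    proof -
      have TT: "T \<subseteq> {..<n}" "card T = k - 1" using T unfolding Sub_def by auto
      have "finite T" using TT(1) by (rule finite_subset) auto
      then show ?thesis using TT by (simp add: card_Diff_subset)
    qed
    ultimately have "card {x. x \<in> Prs n \<and> fst x \<notin> T \<and> snd x \<notin> T} = (n - (k - 1)) choose 2"
      using pair_card_Prs[of "{..<n} - T" n] by auto
    then show "(\<Sum>x\<in>{x. x \<in> Prs n \<and> fst x \<notin> T \<and> snd x \<notin> T}. f T) = real ((n - (k - 1)) choose 2) * f T"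
      by simp
  qed
  finally show ?thesis by (simp add: sum_distrib_left)
qed

definition Sub2 :: "nat \<Rightarrow> nat \<Rightarrow> nat set set" where
  "Sub2 n k = {U. U \<subseteq> {..<n} \<and> card U + 2 = k}"

lemma finite_Sub2 [simp]: "finite (Sub2 n k)"
proof -
  have "Sub2 n k \<subseteq> Pow {..<n}" unfolding Sub2_def by auto
  then show ?thesis by (rule finite_subset) auto
qed

lemma Cnt2:
  shows "(\<Sum>x\<in>Prs n. \<Sum>U\<in>{U \<in> Sub2 n k. fst x \<notin> U \<and> snd x \<notin> U}. f (insert (fst x) (insert (snd x) U)))
       = real (k choose 2) * (\<Sum>V\<in>Sub n k. (f V :: real))"
proof -
  have "(\<Sum>x\<in>Prs n. \<Sum>U\<in>{U \<in> Sub2 n k. fst x \<notin> U \<and> snd x \<notin> U}. f (insert (fst x) (insert (snd x) U)))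
     = (\<Sum>(x, U)\<in>Sigma (Prs n) (\<lambda>x. {U \<in> Sub2 n k. fst x \<notin> U \<and> snd x \<notin> U}). f (insert (fst x) (insert (snd x) U)))"
    by (rule sum.Sigma) auto
  also have "\<dots> = (\<Sum>(V, x)\<in>Sigma (Sub n k) (\<lambda>V. {x \<in> Prs n. fst x \<in> V \<and> snd x \<in> V}). f V)"
  proof (rule sum.reindex_bij_witness[where i="\<lambda>(V, x). (x, V - {fst x, snd x})"
        and j="\<lambda>(x, U). (insert (fst x) (insert (snd x) U), x)"])
    fix y assume y: "y \<in> Sigma (Prs n) (\<lambda>x. {U \<in> Sub2 n k. fst x \<notin> U \<and> snd x \<notin> U})"
    obtain x U where yt: "y = (x, U)" by (cases y)
    have fU: "finite U" using y yt unfolding Sub2_def by (auto intro: finite_subset)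
    have ne: "fst x \<noteq> snd x" "fst x < n" "snd x < n" using y yt by (auto simp: Prs_def)
    show "(case (case y of (x, U) \<Rightarrow> (insert (fst x) (insert (snd x) U), x)) of (V, x) \<Rightarrow> (x, V - {fst x, snd x})) = y"
      using y yt by auto
    show "(case y of (x, U) \<Rightarrow> (insert (fst x) (insert (snd x) U), x)) \<in> Sigma (Sub n k) (\<lambda>V. {x \<in> Prs n. fst x \<in> V \<and> snd x \<in> V})"
      using y yt fU ne unfolding Sub_def Sub2_def by auto
    show "(case (case y of (x, U) \<Rightarrow> (insert (fst x) (insert (snd x) U), x)) of (V, x) \<Rightarrow> f V)
        = (case y of (x, U) \<Rightarrow> f (insert (fst x) (insert (snd x) U)))"
      using yt by simp
  next
    fix z assume z: "z \<in> Sigma (Sub n k) (\<lambda>V. {x \<in> Prs n. fst x \<in> V \<and> snd x \<in> V})"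
    obtain V x where zv: "z = (V, x)" by (cases z)
    have fV: "finite V" using z zv unfolding Sub_def by (auto intro: finite_subset)
    have ne: "fst x \<noteq> snd x" "fst x \<in> V" "snd x \<in> V" using z zv by (auto simp: Prs_def)
    have c: "card (V - {fst x, snd x}) + 2 = card V"
    proof -
      have sub: "{fst x, snd x} \<subseteq> V" using ne by auto
      have "card {fst x, snd x} \<le> card V" using fV sub by (rule card_mono)
      then show ?thesis using fV sub ne by (simp add: card_Diff_subset)
    qed
    show "(case (case z of (V, x) \<Rightarrow> (x, V - {fst x, snd x})) of (x, U) \<Rightarrow> (insert (fst x) (insert (snd x) U), x)) = z"
      using z zv ne by auto
    show "(case z of (V, x) \<Rightarrow> (x, V - {fst x, snd x})) \<in> Sigma (Prs n) (\<lambda>x. {U \<in> Sub2 n k. fst x \<notin> U \<and> snd x \<notin> U})"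
      using z zv c unfolding Sub_def Sub2_def by auto
  qed
  also have "\<dots> = (\<Sum>V\<in>Sub n k. \<Sum>x\<in>{x \<in> Prs n. fst x \<in> V \<and> snd x \<in> V}. f V)"
    by (rule sum.Sigma[symmetric]) auto
  also have "\<dots> = (\<Sum>V\<in>Sub n k. real (k choose 2) * f V)"
  proof (rule sum.cong[OF refl])
    fix V assume V: "V \<in> Sub n k"
    then have "card {x \<in> Prs n. fst x \<in> V \<and> snd x \<in> V} = k choose 2"
      using pair_card_Prs[of V n] unfolding Sub_def by auto
    then show "(\<Sum>x\<in>{x \<in> Prs n. fst x \<in> V \<and> snd x \<in> V}. f V) = real (k choose 2) * f V" by simp
  qed
  finally show ?thesis by (simp add: sum_distrib_left)
qed



lemma split_sub:
  assumes "l \<noteq> q" "q < n" "1 \<le> k"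
  shows "(\<Sum>T\<in>{T \<in> Sub n (k - 1). l \<notin> T}. g T)
       = (\<Sum>T\<in>{T \<in> Sub n (k - 1). l \<notin> T \<and> q \<notin> T}. g T) + (\<Sum>U\<in>{U \<in> Sub2 n k. l \<notin> U \<and> q \<notin> U}. (g (insert q U) :: real))"
proof -
  let ?Z = "{U \<in> Sub2 n k. l \<notin> U \<and> q \<notin> U}"
  have eq: "{T \<in> Sub n (k - 1). l \<notin> T} = {T \<in> Sub n (k - 1). l \<notin> T \<and> q \<notin> T} \<union> insert q ` ?Z"
  proof
    show "{T \<in> Sub n (k - 1). l \<notin> T} \<subseteq> {T \<in> Sub n (k - 1). l \<notin> T \<and> q \<notin> T} \<union> insert q ` ?Z"
    proof
      fix T assume T: "T \<in> {T \<in> Sub n (k - 1). l \<notin> T}"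
      have fT: "finite T" using T unfolding Sub_def by (auto intro: finite_subset)
      show "T \<in> {T \<in> Sub n (k - 1). l \<notin> T \<and> q \<notin> T} \<union> insert q ` ?Z"
      proof (cases "q \<in> T")
        case False then show ?thesis using T by auto
      next
        case True
        have "card T \<ge> 1" using True fT by (simp add: Suc_le_eq card_gt_0_iff) blast
        then have "T - {q} \<in> ?Z" using T True fT assms unfolding Sub_def Sub2_def by auto
        moreover have "T = insert q (T - {q})" using True by auto
        ultimately show ?thesis by blast
      qed
    qed
  next
    show "{T \<in> Sub n (k - 1). l \<notin> T \<and> q \<notin> T} \<union> insert q ` ?Z \<subseteq> {T \<in> Sub n (k - 1). l \<notin> T}"
    proof
      fix T assume T: "T \<in> {T \<in> Sub n (k - 1). l \<notin> T \<and> q \<notin> T} \<union> insert q ` ?Z"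
      show "T \<in> {T \<in> Sub n (k - 1). l \<notin> T}"
      proof (cases "T \<in> insert q ` ?Z")
        case True
        then obtain U where U: "U \<in> ?Z" "T = insert q U" by auto
        have fU: "finite U" using U unfolding Sub2_def by (auto intro: finite_subset)
        show ?thesis using U fU assms unfolding Sub_def Sub2_def by auto
      next
        case False then show ?thesis using T by auto
      qed
    qed
  qed
  have disj: "{T \<in> Sub n (k - 1). l \<notin> T \<and> q \<notin> T} \<inter> insert q ` ?Z = {}" by auto
  have inj: "inj_on (insert q) ?Z"
    by (rule inj_onI) (metis Diff_insert_absorb mem_Collect_eq)
  have "(\<Sum>T\<in>{T \<in> Sub n (k - 1). l \<notin> T}. g T)
      = (\<Sum>T\<in>{T \<in> Sub n (k - 1). l \<notin> T \<and> q \<notin> T}. g T) + (\<Sum>T\<in>insert q ` ?Z. g T)"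
    unfolding eq by (rule sum.union_disjoint) (auto simp: disj)
  also have "(\<Sum>T\<in>insert q ` ?Z. g T) = (\<Sum>U\<in>?Z. g (insert q U))"
    using inj by (simp add: sum.reindex)
  finally show ?thesis .
qed

lemma PairEq:
  assumes "i < j" "j < n" "1 \<le> k"
  shows "(\<Sum>T\<in>{T \<in> Sub n (k - 1). i \<notin> T}. Gt n a b c T i i j) - (\<Sum>T\<in>{T \<in> Sub n (k - 1). j \<notin> T}. Gt n a b c T j i j)
   = - (\<Sum>T\<in>{T \<in> Sub n (k - 1). i \<notin> T \<and> j \<notin> T}. Phi n a b c T)
     + (\<Sum>U\<in>{U \<in> Sub2 n k. i \<notin> U \<and> j \<notin> U}. Phi n a b c (insert i (insert j U)))"
proof -
  let ?Y = "{T \<in> Sub n (k - 1). i \<notin> T \<and> j \<notin> T}"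
  let ?Z = "{U \<in> Sub2 n k. i \<notin> U \<and> j \<notin> U}"
  have s1: "(\<Sum>T\<in>{T \<in> Sub n (k - 1). i \<notin> T}. Gt n a b c T i i j)
      = (\<Sum>T\<in>?Y. Gt n a b c T i i j) + (\<Sum>U\<in>?Z. Gt n a b c (insert j U) i i j)"
    using split_sub[of i j n k "\<lambda>T. Gt n a b c T i i j"] assms by simp
  have y: "{T \<in> Sub n (k - 1). j \<notin> T \<and> i \<notin> T} = ?Y" by auto
  have z: "{U \<in> Sub2 n k. j \<notin> U \<and> i \<notin> U} = ?Z" by auto
  have s2: "(\<Sum>T\<in>{T \<in> Sub n (k - 1). j \<notin> T}. Gt n a b c T j i j)
      = (\<Sum>T\<in>?Y. Gt n a b c T j i j) + (\<Sum>U\<in>?Z. Gt n a b c (insert i U) j i j)"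
    using split_sub[of j i n k "\<lambda>T. Gt n a b c T j i j"] assms unfolding y z by simp
  have d1: "(\<Sum>T\<in>?Y. Gt n a b c T i i j) - (\<Sum>T\<in>?Y. Gt n a b c T j i j) = - (\<Sum>T\<in>?Y. Phi n a b c T)"
    using R2inst[OF assms(1,2)] by (simp add: sum_subtractf[symmetric] sum_negf[symmetric])
  have d2: "(\<Sum>U\<in>?Z. Gt n a b c (insert j U) i i j) - (\<Sum>U\<in>?Z. Gt n a b c (insert i U) j i j)
      = (\<Sum>U\<in>?Z. Phi n a b c (insert i (insert j U)))"
    using Mixed[OF assms(1,2)] by (simp add: sum_subtractf[symmetric])
  show ?thesis using s1 s2 d1 d2 by linarith
qed

lemma main4:
  assumes "1 \<le> k" "k \<le> n"
  shows "real k * (real b + (real k - 1) * real c / 2) * Psi n k a b c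
       = (real n - real k + 1) * (real a - 1 + (real n - real k) * real c / 2) * Psi n (k - 1) a b c"
proof -
  let ?P = "Phi n a b c"
  let ?G = "Gt n a b c"
  let ?X = "\<lambda>i. {T \<in> Sub n (k - 1). i \<notin> T}"
  have P1: "Psi n (k - 1) a b c = (\<Sum>T\<in>Sub n (k - 1). ?P T)" by (simp add: Psi_CC Phi_def)
  have P2: "Psi n k a b c = (\<Sum>T\<in>Sub n k. ?P T)" by (simp add: Psi_CC Phi_def)
  have z: "(\<Sum>i<n. \<Sum>T\<in>?X i. (1 - real a) * ?P T + real b * ?P (insert i T)
      + (\<Sum>j\<in>{i<..<n}. real c * ?G T i i j) - (\<Sum>j<i. real c * ?G T i j i)) = 0"
    by (intro sum.neutral ballI Dinst) auto
  have A3: "(\<Sum>i<n. \<Sum>T\<in>?X i. \<Sum>j\<in>{i<..<n}. ?G T i i j) = (\<Sum>(i, j)\<in>Prs n. \<Sum>T\<in>?X i. ?G T i i j)"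
  proof -
    have "(\<Sum>i<n. \<Sum>T\<in>?X i. \<Sum>j\<in>{i<..<n}. ?G T i i j) = (\<Sum>i<n. \<Sum>j\<in>{i<..<n}. \<Sum>T\<in>?X i. ?G T i i j)"
      by (rule sum.cong[OF refl], rule sum.swap)
    also have "\<dots> = (\<Sum>(i, j)\<in>Prs n. \<Sum>T\<in>?X i. ?G T i i j)" by (rule sum_Prs1)
    finally show ?thesis .
  qed
  have A4: "(\<Sum>i<n. \<Sum>T\<in>?X i. \<Sum>j<i. ?G T i j i) = (\<Sum>(j, i)\<in>Prs n. \<Sum>T\<in>?X i. ?G T i j i)"
  proof -
    have "(\<Sum>i<n. \<Sum>T\<in>?X i. \<Sum>j<i. ?G T i j i) = (\<Sum>i<n. \<Sum>j<i. \<Sum>T\<in>?X i. ?G T i j i)"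
      by (rule sum.cong[OF refl], rule sum.swap)
    also have "\<dots> = (\<Sum>(j, i)\<in>Prs n. \<Sum>T\<in>?X i. ?G T i j i)" by (rule sum_Prs2)
    finally show ?thesis .
  qed
  have A34: "(\<Sum>(i, j)\<in>Prs n. \<Sum>T\<in>?X i. ?G T i i j) - (\<Sum>(j, i)\<in>Prs n. \<Sum>T\<in>?X i. ?G T i j i)
     = - real ((n - (k - 1)) choose 2) * Psi n (k - 1) a b c + real (k choose 2) * Psi n k a b c"
  proof -
    have "(\<Sum>(i, j)\<in>Prs n. \<Sum>T\<in>?X i. ?G T i i j) - (\<Sum>(j, i)\<in>Prs n. \<Sum>T\<in>?X i. ?G T i j i)
       = (\<Sum>x\<in>Prs n. (\<Sum>T\<in>?X (fst x). ?G T (fst x) (fst x) (snd x)) - (\<Sum>T\<in>?X (snd x). ?G T (snd x) (fst x) (snd x)))"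
      by (simp add: sum_subtractf case_prod_unfold)
    also have "\<dots> = (\<Sum>x\<in>Prs n. - (\<Sum>T\<in>{T \<in> Sub n (k - 1). fst x \<notin> T \<and> snd x \<notin> T}. ?P T)
          + (\<Sum>U\<in>{U \<in> Sub2 n k. fst x \<notin> U \<and> snd x \<notin> U}. ?P (insert (fst x) (insert (snd x) U))))"
      using assms by (intro sum.cong refl PairEq) (auto simp: Prs_def)
    also have "\<dots> = - (\<Sum>x\<in>Prs n. \<Sum>T\<in>{T \<in> Sub n (k - 1). fst x \<notin> T \<and> snd x \<notin> T}. ?P T)
          + (\<Sum>x\<in>Prs n. \<Sum>U\<in>{U \<in> Sub2 n k. fst x \<notin> U \<and> snd x \<notin> U}. ?P (insert (fst x) (insert (snd x) U)))"
      by (simp add: sum.distrib sum_negf sum_subtractf)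
    also have "\<dots> = - real ((n - (k - 1)) choose 2) * Psi n (k - 1) a b c + real (k choose 2) * Psi n k a b c"
      unfolding Cnt1[OF assms(2,1)] Cnt2 P1 P2 by simp
    finally show ?thesis .
  qed
  have "(\<Sum>i<n. \<Sum>T\<in>?X i. (1 - real a) * ?P T + real b * ?P (insert i T)
      + (\<Sum>j\<in>{i<..<n}. real c * ?G T i i j) - (\<Sum>j<i. real c * ?G T i j i))
    = (1 - real a) * (\<Sum>i<n. \<Sum>T\<in>?X i. ?P T) + real b * (\<Sum>i<n. \<Sum>T\<in>?X i. ?P (insert i T))
      + real c * ((\<Sum>i<n. \<Sum>T\<in>?X i. \<Sum>j\<in>{i<..<n}. ?G T i i j) - (\<Sum>i<n. \<Sum>T\<in>?X i. \<Sum>j<i. ?G T i j i))"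
    by (simp add: sum.distrib sum_subtractf sum_distrib_left algebra_simps)
  also have "\<dots> = (1 - real a) * (real (n - (k - 1)) * Psi n (k - 1) a b c) + real b * (real k * Psi n k a b c)
      + real c * (- real ((n - (k - 1)) choose 2) * Psi n (k - 1) a b c + real (k choose 2) * Psi n k a b c)"
    unfolding A3 A4 A34 S1[OF assms(2,1)] S2[OF assms(1)] P1 P2 ..
  finally have e: "(1 - real a) * (real (n - (k - 1)) * Psi n (k - 1) a b c) + real b * (real k * Psi n k a b c)
      + real c * (- real ((n - (k - 1)) choose 2) * Psi n (k - 1) a b c + real (k choose 2) * Psi n k a b c) = 0"
    using z by simp
  have c1: "real ((n - (k - 1)) choose 2) = (real n - real k + 1) * (real n - real k) / 2"
    using two_choose[of "n - (k - 1)"] assms by (simp add: of_nat_diff algebra_simps)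
  have c2: "real (k choose 2) = real k * (real k - 1) / 2"
    using two_choose[of k] by simp
  have nk: "real (n - (k - 1)) = real n - real k + 1" using assms by (simp add: of_nat_diff)
  show ?thesis using e unfolding c1 c2 nk by (simp add: algebra_simps)
qed



lemma CC_cong:
  assumes "\<And>i. i < n \<Longrightarrow> \<alpha> i = \<alpha>' i" "\<And>i. i < n \<Longrightarrow> \<beta> i = \<beta>' i"
  shows "CC n \<alpha> \<beta> \<gamma> = CC n \<alpha>' \<beta>' \<gamma>"
proof -
  have "TT n \<alpha> \<gamma> = TT n \<alpha>' \<gamma>" using assms(1) unfolding TT_def ex_def by auto
  moreover have "wt n \<beta> \<gamma> m p = wt n \<beta>' \<gamma> m p" for m p
  proof -
    have "(\<Prod>i<n. K (\<beta> i) (m i)) = (\<Prod>i<n. K (\<beta>' i) (m i))" by (rule prod.cong) (auto simp: assms(2))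
    then show ?thesis unfolding wt_def by simp
  qed
  ultimately show ?thesis unfolding CC_def by (simp add: case_prod_unfold)
qed

lemma Sub_0: "Sub n 0 = {{}}"
proof -
  have "S = {}" if "S \<subseteq> {..<n}" "card S = 0" for S
    using that by (metis card_0_eq finite_lessThan finite_subset)
  then show ?thesis unfolding Sub_def by auto
qed

lemma Sub_n: "Sub n n = {{..<n}}"
proof -
  have "S = {..<n}" if "S \<subseteq> {..<n}" "card S = n" for S
    using that by (intro card_subset_eq) auto
  then show ?thesis unfolding Sub_def by auto
qed

lemma part1:
  assumes "1 \<le> a"
  shows "Psi n n a b c = Psi n 0 (a - 1) (b + 1) c"
  unfolding Psi_CC Sub_0 Sub_n using assms
  by simp (rule CC_cong, auto simp: al_def be_def of_nat_diff)

lemma part3: "Psi n 0 1 b 0 = 1"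
proof -
  let ?T = "TT n (al 1 {}) (\<lambda>_ _. 0)"
  have B0: "Bd n (al 1 {}) (\<lambda>_ _. 0) = 0" unfolding Bd_def al_def by simp
  have "?T = {(\<lambda>_. 0, \<lambda>_ _. 0)}"
  proof
    show "?T \<subseteq> {(\<lambda>_. 0, \<lambda>_ _. 0)}"
    proof
      fix t assume t: "t \<in> ?T"
      obtain m p where tp: "t = (m, p)" by (cases t)
      have "(m, p) \<in> ?T" using t tp by simp
      from TT_bound[OF this] B0 have "\<forall>i. m i = 0" "\<forall>i j. p i j = 0" by auto
      then show "t \<in> {(\<lambda>_. 0, \<lambda>_ _. 0)}" using tp by (auto simp: fun_eq_iff)
    qed
  next
    show "{(\<lambda>_. 0, \<lambda>_ _. 0)} \<subseteq> ?T" by (auto simp: TT_def ex_def al_def)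
  qed
  then show ?thesis
    unfolding Psi_CC Sub_0 CC_def wt_def by (simp add: K_def)
qed

lemma ex_shift:
  assumes "m 0 = 0" "\<forall>j. p 0 j = 0"
  shows "ex (Suc N) \<alpha> \<gamma> m p (Suc i) = ex N (\<lambda>i. \<alpha> (Suc i) - int (\<gamma> 0 (Suc i))) (\<lambda>i j. \<gamma> (Suc i) (Suc j))
            (\<lambda>i. m (Suc i)) (\<lambda>i j. p (Suc i) (Suc j)) i"
proof -
  have e: "{Suc i<..<Suc N} = Suc ` {i<..<N}"
  proof
    show "{Suc i<..<Suc N} \<subseteq> Suc ` {i<..<N}"
    proof
      fix x assume x: "x \<in> {Suc i<..<Suc N}"
      then have "x = Suc (x - 1)" "x - 1 \<in> {i<..<N}" by auto
      then show "x \<in> Suc ` {i<..<N}" by blast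
    qed
  qed auto
  have s1: "(\<Sum>j\<in>{Suc i<..<Suc N}. int (p (Suc i) j)) = (\<Sum>j\<in>{i<..<N}. int (p (Suc i) (Suc j)))"
    unfolding e by (simp add: sum.reindex)
  have s2: "(\<Sum>j<Suc i. int (\<gamma> j (Suc i)) + int (p j (Suc i)))
      = int (\<gamma> 0 (Suc i)) + (\<Sum>j<i. int (\<gamma> (Suc j) (Suc i)) + int (p (Suc j) (Suc i)))"
    by (subst sum.lessThan_Suc_shift) (simp add: assms)
  show ?thesis unfolding ex_def s1 s2 by simp
qed

lemma wt_shift:
  assumes "m 0 = 0" "\<forall>j. p 0 j = 0"
  shows "wt (Suc N) \<beta> \<gamma> m p = wt N (\<lambda>i. \<beta> (Suc i)) (\<lambda>i j. \<gamma> (Suc i) (Suc j)) (\<lambda>i. m (Suc i)) (\<lambda>i j. p (Suc i) (Suc j))"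
proof -
  have p1: "(\<Prod>i<Suc N. K (\<beta> i) (m i)) = (\<Prod>i<N. K (\<beta> (Suc i)) (m (Suc i)))"
    by (subst prod.lessThan_Suc_shift) (simp add: assms)
  let ?h = "\<lambda>(i, j). (Suc i, Suc j)"
  have sub: "?h ` Prs N \<subseteq> Prs (Suc N)" by (auto simp: Prs_def)
  have "(\<Prod>(i, j)\<in>Prs (Suc N). K (\<gamma> i j) (p i j)) = (\<Prod>(i, j)\<in>?h ` Prs N. K (\<gamma> i j) (p i j))"
  proof (rule prod.mono_neutral_right[OF finite_Prs sub], rule ballI)
    fix x assume x: "x \<in> Prs (Suc N) - ?h ` Prs N"
    obtain i j where xij: "x = (i, j)" by (cases x)
    have "i = 0"
    proof (rule ccontr)
      assume "i \<noteq> 0"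
      then have "x = ?h (i - 1, j - 1)" "(i - 1, j - 1) \<in> Prs N" using x xij by (auto simp: Prs_def)
      then show False using x by blast
    qed
    then show "(case x of (i, j) \<Rightarrow> K (\<gamma> i j) (p i j)) = 1" using xij assms by simp
  qed
  also have "\<dots> = (\<Prod>(i, j)\<in>Prs N. K (\<gamma> (Suc i) (Suc j)) (p (Suc i) (Suc j)))"
    by (subst prod.reindex) (auto simp: inj_on_def case_prod_unfold)
  finally show ?thesis unfolding wt_def p1 by simp
qed

lemma CC_shift:
  assumes "\<alpha> 0 = 0"
  shows "CC (Suc N) \<alpha> \<beta> \<gamma> = CC N (\<lambda>i. \<alpha> (Suc i) - int (\<gamma> 0 (Suc i))) (\<lambda>i. \<beta> (Suc i)) (\<lambda>i j. \<gamma> (Suc i) (Suc j))"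
proof -
  let ?a = "\<lambda>i. \<alpha> (Suc i) - int (\<gamma> 0 (Suc i))"
  let ?g = "\<lambda>i j. \<gamma> (Suc i) (Suc j)"
  let ?dn = "\<lambda>(m :: nat \<Rightarrow> nat, p :: nat \<Rightarrow> nat \<Rightarrow> nat). (\<lambda>i. m (Suc i), \<lambda>i j. p (Suc i) (Suc j))"
  let ?up = "\<lambda>(m :: nat \<Rightarrow> nat, p :: nat \<Rightarrow> nat \<Rightarrow> nat). (\<lambda>i. case i of 0 \<Rightarrow> 0 | Suc i' \<Rightarrow> m i',
       \<lambda>i j. case i of 0 \<Rightarrow> 0 | Suc i' \<Rightarrow> (case j of 0 \<Rightarrow> 0 | Suc j' \<Rightarrow> p i' j'))"
  have zero: "m 0 = 0 \<and> (\<forall>j. p 0 j = 0)" if mp: "(m, p) \<in> TT (Suc N) \<alpha> \<gamma>" for m p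
  proof -
    have e0: "ex (Suc N) \<alpha> \<gamma> m p 0 = 0" using mp unfolding TT_def by auto
    then have "int (m 0) + (\<Sum>j\<in>{0<..<Suc N}. int (p 0 j)) = 0" using assms unfolding ex_def by simp
    moreover have "0 \<le> (\<Sum>j\<in>{0<..<Suc N}. int (p 0 j))" by (rule sum_nonneg) auto
    ultimately have m0: "m 0 = 0" and ps: "(\<Sum>j\<in>{0<..<Suc N}. int (p 0 j)) = 0" by linarith+
    have "\<forall>j\<in>{0<..<Suc N}. int (p 0 j) = 0" using ps by (subst (asm) sum_nonneg_eq_0_iff) auto
    moreover have "\<forall>j. \<not> (0 < j \<and> j < Suc N) \<longrightarrow> p 0 j = 0" using mp unfolding TT_def by auto
    ultimately have "\<forall>j. p 0 j = 0" by (metis greaterThanLessThan_iff of_nat_eq_0_iff)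
    then show ?thesis using m0 by simp
  qed
  show ?thesis unfolding CC_def
  proof (rule sum.reindex_bij_witness[where i="?up" and j="?dn"])
    fix t assume t: "t \<in> TT (Suc N) \<alpha> \<gamma>"
    obtain m p where tp: "t = (m, p)" by (cases t)
    have z: "m 0 = 0" "\<forall>j. p 0 j = 0" using zero t tp by auto
    have p0: "\<forall>i. p i 0 = 0" using t tp unfolding TT_def by auto
    show "?up (?dn t) = t" using tp z p0 by (auto simp: fun_eq_iff split: nat.split)
    have sm: "\<forall>i. N \<le> i \<longrightarrow> m (Suc i) = 0" and sp: "\<forall>i j. \<not> (i < j \<and> j < N) \<longrightarrow> p (Suc i) (Suc j) = 0"
      using t tp unfolding TT_def by auto
    have "\<forall>i<N. ex N ?a ?g (\<lambda>i. m (Suc i)) (\<lambda>i j. p (Suc i) (Suc j)) i = 0"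
      using t tp ex_shift[where m=m and p=p, OF z, symmetric] unfolding TT_def by auto
    then show "?dn t \<in> TT N ?a ?g" using tp sm sp unfolding TT_def by auto
    show "(case ?dn t of (m, p) \<Rightarrow> wt N (\<lambda>i. \<beta> (Suc i)) ?g m p) = (case t of (m, p) \<Rightarrow> wt (Suc N) \<beta> \<gamma> m p)"
      using tp z wt_shift[where m=m and p=p and N=N, OF z] by simp
  next
    fix s assume s: "s \<in> TT N ?a ?g"
    obtain m p where sp: "s = (m, p)" by (cases s)
    show "?dn (?up s) = s" using sp by auto
    define M where "M = (\<lambda>i. case i of 0 \<Rightarrow> 0 | Suc i' \<Rightarrow> m i')"
    define P where "P = (\<lambda>i j. case i of 0 \<Rightarrow> 0 | Suc i' \<Rightarrow> (case j of 0 \<Rightarrow> 0 | Suc j' \<Rightarrow> p i' j'))"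
    have upd: "?up s = (M, P)" using sp by (simp add: M_def P_def)
    have z: "M 0 = 0" "\<forall>j. P 0 j = 0" by (auto simp: M_def P_def)
    have sM: "\<forall>i. Suc N \<le> i \<longrightarrow> M i = 0" using s sp unfolding TT_def M_def by (auto split: nat.split)
    have sP: "\<forall>i j. \<not> (i < j \<and> j < Suc N) \<longrightarrow> P i j = 0" using s sp unfolding TT_def P_def by (auto split: nat.split)
    have dn: "(\<lambda>i. M (Suc i)) = m" "(\<lambda>i j. P (Suc i) (Suc j)) = p" by (auto simp: M_def P_def)
    have "\<forall>i<Suc N. ex (Suc N) \<alpha> \<gamma> M P i = 0"
    proof (intro allI impI)
      fix i assume i: "i < Suc N"
      show "ex (Suc N) \<alpha> \<gamma> M P i = 0"
      proof (cases i)
        case 0 then show ?thesis using assms z unfolding ex_def by simp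
      next
        case (Suc i')
        then show ?thesis using ex_shift[where m=M and p=P and N=N and \<alpha>=\<alpha> and \<gamma>=\<gamma> and i=i', OF z] s sp i unfolding dn TT_def by auto
      qed
    qed
    then show "?up s \<in> TT (Suc N) \<alpha> \<gamma>" using upd sM sP unfolding TT_def by auto
  qed
qed



lemma TT_empty:
  assumes "0 < n" "\<alpha> 0 > 0"
  shows "TT n \<alpha> \<gamma> = {}"
proof (rule ccontr)
  assume "TT n \<alpha> \<gamma> \<noteq> {}"
  then obtain m p where mp: "(m, p) \<in> TT n \<alpha> \<gamma>" by auto
  then have "ex n \<alpha> \<gamma> m p 0 = 0" using assms unfolding TT_def by auto
  moreover have "0 \<le> (\<Sum>j\<in>{0<..<n}. int (p 0 j))" by (rule sum_nonneg) auto
  ultimately show False using assms unfolding ex_def by simp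
qed

lemma part2: "Psi (Suc N) N 1 b c = Psi N 0 c (b + 1) c"
proof -
  let ?S0 = "{..<Suc N} - {0}"
  let ?f = "\<lambda>S. CC (Suc N) (al 1 S) (be b S) (\<lambda>_ _. c)"
  have S0: "?S0 \<in> Sub (Suc N) N" unfolding Sub_def by auto
  have z: "?f S = 0" if S: "S \<in> Sub (Suc N) N - {?S0}" for S
  proof -
    have "0 \<in> S"
    proof (rule ccontr)
      assume "0 \<notin> S"
      then have "S \<subseteq> ?S0" using S unfolding Sub_def by auto
      moreover have "card S = card ?S0" using S unfolding Sub_def by auto
      ultimately have "S = ?S0" by (intro card_subset_eq) auto
      then show False using S by auto
    qed
    then have "TT (Suc N) (al 1 S) (\<lambda>_ _. c) = {}" by (intro TT_empty) (auto simp: al_def)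
    then show ?thesis unfolding CC_def by simp
  qed
  have "Psi (Suc N) N 1 b c = ?f ?S0 + (\<Sum>S\<in>Sub (Suc N) N - {?S0}. ?f S)"
    unfolding Psi_CC using S0 by (simp add: sum.remove)
  also have "(\<Sum>S\<in>Sub (Suc N) N - {?S0}. ?f S) = 0" using z by simp
  also have "?f ?S0 = CC N (\<lambda>i. al 1 ?S0 (Suc i) - int c) (\<lambda>i. be b ?S0 (Suc i)) (\<lambda>_ _. c)"
    by (subst CC_shift) (auto simp: al_def)
  also have "\<dots> = CC N (al c {}) (be (b + 1) {}) (\<lambda>_ _. c)"
    by (rule CC_cong) (auto simp: al_def be_def)
  also have "\<dots> = Psi N 0 c (b + 1) c" unfolding Psi_CC Sub_0 by simp
  finally show ?thesis by simp
qed

theorem lemma5p10: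
  fixes a b c n k :: nat
  assumes "1 \<le> a" and "1 \<le> b" and "1 \<le> n" and "k \<le> n"
  shows "Psi n n a b c = Psi n 0 (a - 1) (b + 1) c
       \<and> Psi n (n - 1) 1 b c = Psi (n - 1) 0 c (b + 1) c
       \<and> Psi n 0 1 b 0 = 1
       \<and> (1 \<le> k \<longrightarrow>
           real k * (real b + (real k - 1) * real c / 2) * Psi n k a b c
         = (real n - real k + 1) * (real a - 1 + (real n - real k) * real c / 2) * Psi n (k - 1) a b c)"
proof (intro conjI impI)
  show "Psi n n a b c = Psi n 0 (a - 1) (b + 1) c" using assms(1) by (rule part1)
  obtain N where N: "n = Suc N" using assms(3) by (cases n) auto
  show "Psi n (n - 1) 1 b c = Psi (n - 1) 0 c (b + 1) c" unfolding N using part2 by simp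
  show "Psi n 0 1 b 0 = 1" by (rule part3)
  assume "1 \<le> k"
  then show "real k * (real b + (real k - 1) * real c / 2) * Psi n k a b c
         = (real n - real k + 1) * (real a - 1 + (real n - real k) * real c / 2) * Psi n (k - 1) a b c"
    using assms(4) by (rule main4)
qed

end
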